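(* For every complex number $a$ of modulus one, there is no $6\times 6$ complex Hadamard matrix all of whose entries lie in $\{1,a,-\bar a\}$.
   Context: A complex Hadamard matrix (CHM) of order $n$ is an $n\times n$ complex matrix $H$ all of whose entries have modulus one and which satisfies $HH^\dagger=nI$. *)

theory Defs
  imports "HOL-Analysis.Analysis"
begin

text \<open>An n x n complex matrix is represented as H :: nat => nat => complex, with
  entries H i j for i, j < n (entries outside the range are irrelevant).\<close>

definition complex_hadamard :: "nat \<Rightarrow> (nat \<Rightarrow> nat \<Rightarrow> complex) \<Rightarrow> bool" where
  "complex_hadamard n H \<longleftrightarrow>
     (\<forall>i<n. \<forall>j<n. cmod (H i j) = 1) \<and>
     (\<forall>i<n. \<forall>j<n. (\<Sum>k<n. H i k * cnj (H j k)) = (if i = j then of_nat n else 0))"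

end

theory Submission imports Defs begin

definition cnt :: "(nat\<Rightarrow>nat\<Rightarrow>nat) \<Rightarrow> nat \<Rightarrow> nat \<Rightarrow> nat \<Rightarrow> nat \<Rightarrow> nat" where
 "cnt X i j x y = (\<Sum>k<6. if X i k = x \<and> X j k = y then 1 else 0)"
definition col :: "(nat\<Rightarrow>nat\<Rightarrow>nat) \<Rightarrow> nat \<Rightarrow> nat \<Rightarrow> nat" where
 "col X k x = (\<Sum>i<6. if X i k = x then 1 else 0)"

lemma dc: "(\<Sum>i<6. \<Sum>j<6. cnt X i j x y) = (\<Sum>k<6. col X k x * col X k y)"
proof -
  have "(\<Sum>i<6. \<Sum>j<6. cnt X i j x y) = (\<Sum>i<6::nat. \<Sum>j<6::nat. \<Sum>k<6::nat. (if X i k = x then 1 else 0) * (if X j k = y then 1 else (0::nat)))"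
    unfolding cnt_def by (auto intro!: sum.cong)
  also have "\<dots> = (\<Sum>i<6::nat. \<Sum>k<6::nat. \<Sum>j<6::nat. (if X i k = x then 1 else 0) * (if X j k = y then 1 else (0::nat)))"
    by (rule sum.cong[OF refl], rule sum.swap)
  also have "\<dots> = (\<Sum>k<6::nat. \<Sum>i<6::nat. \<Sum>j<6::nat. (if X i k = x then 1 else 0) * (if X j k = y then 1 else (0::nat)))"
    by (rule sum.swap)
  also have "\<dots> = (\<Sum>k<6. col X k x * col X k y)"
    unfolding col_def by (simp add: sum_product)
  finally show ?thesis .
qed

definition vl :: "complex \<Rightarrow> nat \<Rightarrow> complex" where
  "vl a x = (if x = 0 then 1 else if x = 1 then a else - cnj a)"

lemma ip:
  fixes g :: "nat \<Rightarrow> nat \<Rightarrow> complex"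
  assumes "\<forall>k<6. X i k < 3 \<and> X j k < 3"
  shows "(\<Sum>k<6. g (X i k) (X j k)) = (\<Sum>x<3. \<Sum>y<3. of_nat (cnt X i j x y) * g x y)"
proof -
  have "(\<Sum>x<3. \<Sum>y<3. of_nat (cnt X i j x y) * g x y) = (\<Sum>x<3. \<Sum>y<3. \<Sum>k<6::nat. (if X i k = x \<and> X j k = y then g x y else 0))"
    unfolding cnt_def by (auto simp: sum_distrib_right of_nat_sum intro!: sum.cong)
  also have "\<dots> = (\<Sum>x<3. \<Sum>k<6::nat. \<Sum>y<3. (if X i k = x \<and> X j k = y then g x y else 0))"
    by (rule sum.cong[OF refl], rule sum.swap)
  also have "\<dots> = (\<Sum>k<6::nat. \<Sum>x<3. \<Sum>y<3. (if X i k = x \<and> X j k = y then g x y else 0))"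
    by (rule sum.swap)
  also have "\<dots> = (\<Sum>k<6::nat. g (X i k) (X j k))"
  proof (intro sum.cong refl)
    fix k assume k: "k \<in> {..<6::nat}"
    have "(\<Sum>x<3. \<Sum>y<3. (if X i k = x \<and> X j k = y then g x y else 0)) = (\<Sum>x<3. if X i k = x then g x (X j k) else 0)"
      using assms k by (intro sum.cong refl) (auto simp: if_distrib sum.delta cong: if_cong)
    also have "\<dots> = g (X i k) (X j k)" using assms k by (simp add: sum.delta)
    finally show "(\<Sum>x<3. \<Sum>y<3. (if X i k = x \<and> X j k = y then g x y else 0)) = g (X i k) (X j k)" .
  qed
  finally show ?thesis by simp
qed

lemma s3: "(\<Sum>x<3::nat. f x) = f 0 + f 1 + f 2" for f :: "nat \<Rightarrow> 'a::comm_monoid_add"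
  by (simp add: eval_nat_numeral add.assoc)
lemma s6: "(\<Sum>x<6::nat. f x) = f 0 + f 1 + f 2 + f 3 + f 4 + f 5" for f :: "nat \<Rightarrow> 'a::comm_monoid_add"
  by (simp add: eval_nat_numeral add.assoc)

definition Pw :: "(nat \<Rightarrow> nat \<Rightarrow> real) \<Rightarrow> (nat\<Rightarrow>nat\<Rightarrow>nat) \<Rightarrow> nat \<Rightarrow> nat \<Rightarrow> real" where
  "Pw w X i j = (\<Sum>x<3. \<Sum>y<3. w x y * real (cnt X i j x y))"
definition Cw :: "(nat \<Rightarrow> nat \<Rightarrow> real) \<Rightarrow> (nat\<Rightarrow>nat\<Rightarrow>nat) \<Rightarrow> nat \<Rightarrow> real" where
  "Cw w X k = (\<Sum>x<3. \<Sum>y<3. w x y * (real (col X k x) * real (col X k y)))"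

lemma gen_dc: "(\<Sum>i<6. \<Sum>j<6. Pw w X i j) = (\<Sum>k<6. Cw w X k)"
proof -
  have "(\<Sum>i<6. \<Sum>j<6. Pw w X i j) = (\<Sum>i<6::nat. \<Sum>x<3::nat. \<Sum>j<6::nat. \<Sum>y<3::nat. w x y * real (cnt X i j x y))"
    unfolding Pw_def by (rule sum.cong[OF refl], rule sum.swap)
  also have "\<dots> = (\<Sum>x<3::nat. \<Sum>i<6::nat. \<Sum>j<6::nat. \<Sum>y<3::nat. w x y * real (cnt X i j x y))"
    by (rule sum.swap)
  also have "\<dots> = (\<Sum>x<3::nat. \<Sum>i<6::nat. \<Sum>y<3::nat. \<Sum>j<6::nat. w x y * real (cnt X i j x y))"
    by (rule sum.cong[OF refl], rule sum.cong[OF refl], rule sum.swap)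
  also have "\<dots> = (\<Sum>x<3::nat. \<Sum>y<3::nat. \<Sum>i<6::nat. \<Sum>j<6::nat. w x y * real (cnt X i j x y))"
    by (rule sum.cong[OF refl], rule sum.swap)
  also have "\<dots> = (\<Sum>x<3. \<Sum>y<3. w x y * real (\<Sum>i<6. \<Sum>j<6. cnt X i j x y))"
    by (simp only: sum_distrib_left of_nat_sum)
  also have "\<dots> = (\<Sum>x<3. \<Sum>y<3. w x y * real (\<Sum>k<6. col X k x * col X k y))"
    by (simp only: dc)
  also have "\<dots> = (\<Sum>x<3::nat. \<Sum>y<3::nat. \<Sum>k<6::nat. w x y * (real (col X k x) * real (col X k y)))"
    by (simp only: sum_distrib_left of_nat_sum of_nat_mult)
  also have "\<dots> = (\<Sum>x<3::nat. \<Sum>k<6::nat. \<Sum>y<3::nat. w x y * (real (col X k x) * real (col X k y)))"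
    by (rule sum.cong[OF refl], rule sum.swap)
  also have "\<dots> = (\<Sum>k<6. Cw w X k)"
    unfolding Cw_def by (rule sum.swap)
  finally show ?thesis .
qed

definition cd :: "complex \<Rightarrow> complex \<Rightarrow> nat" where
  "cd a z = (if z = 1 then 0 else if z = a then 1 else 2)"

lemma cd_lt: "cd a z < 3" by (simp add: cd_def)
lemma vl_cd: "z \<in> {1, a, - cnj a} \<Longrightarrow> vl a (cd a z) = z"
  by (auto simp: cd_def vl_def)

lemma pair_eq:
  assumes a1: "cmod a = 1" and hd: "complex_hadamard 6 H" and ent: "\<forall>i<6. \<forall>j<6. H i j \<in> {1, a, - cnj a}"
    and ij: "i < 6" "j < 6"
  defines "X \<equiv> \<lambda>i k. cd a (H i k)"
  shows "real (cnt X i j 0 0) + real (cnt X i j 1 1) + real (cnt X i j 2 2)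
         + Re a * (real (cnt X i j 1 0) + real (cnt X i j 0 1) - real (cnt X i j 2 0) - real (cnt X i j 0 2))
         + (1 - 2 * (Re a)\<^sup>2) * (real (cnt X i j 1 2) + real (cnt X i j 2 1)) = (if i = j then 6 else 0)"
    and "Im a * ((real (cnt X i j 1 0) + real (cnt X i j 2 0) - real (cnt X i j 0 1) - real (cnt X i j 0 2))
         - 2 * Re a * (real (cnt X i j 1 2) - real (cnt X i j 2 1))) = 0"
proof -
  have n1: "(Re a)\<^sup>2 + (Im a)\<^sup>2 = 1" using a1 by (simp add: cmod_def)
  have orth: "(\<Sum>k<6. H i k * cnj (H j k)) = (if i = j then 6 else 0)"
    using hd ij unfolding complex_hadamard_def by simp
  have "(\<Sum>k<6. H i k * cnj (H j k)) = (\<Sum>k<6. vl a (X i k) * cnj (vl a (X j k)))"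
    using ent ij by (intro sum.cong refl) (simp add: X_def vl_cd)
  also have "\<dots> = (\<Sum>x<3. \<Sum>y<3. of_nat (cnt X i j x y) * (vl a x * cnj (vl a y)))"
    by (rule ip[where g = "\<lambda>x y. vl a x * cnj (vl a y)"]) (simp add: X_def cd_lt)
  finally have E: "(\<Sum>x<3. \<Sum>y<3. of_nat (cnt X i j x y) * (vl a x * cnj (vl a y))) = (if i = j then 6 else 0)"
    using orth by simp
  define D :: real where "D = (if i = j then 6 else 0)"
  have ER: "Re (\<Sum>x<3. \<Sum>y<3. of_nat (cnt X i j x y) * (vl a x * cnj (vl a y))) = D"
    using E unfolding D_def by simp
  have EI: "Im (\<Sum>x<3. \<Sum>y<3. of_nat (cnt X i j x y) * (vl a x * cnj (vl a y))) = 0"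
    using E by simp
  show "real (cnt X i j 0 0) + real (cnt X i j 1 1) + real (cnt X i j 2 2)
         + Re a * (real (cnt X i j 1 0) + real (cnt X i j 0 1) - real (cnt X i j 2 0) - real (cnt X i j 0 2))
         + (1 - 2 * (Re a)\<^sup>2) * (real (cnt X i j 1 2) + real (cnt X i j 2 1)) = (if i = j then 6 else 0)"
  proof -
    have s2: "Im a * Im a = 1 - Re a * Re a" using n1 by (simp add: power2_eq_square)
    have H0: "real (cnt X i j 0 0) + real (cnt X i j 0 (Suc 0)) * Re a -
      real (cnt X i j 0 2) * Re a +
      (real (cnt X i j (Suc 0) 0) * Re a +
       real (cnt X i j (Suc 0) (Suc 0)) * (Re a * Re a + (1 - Re a * Re a)) -
       real (cnt X i j (Suc 0) 2) * (Re a * Re a - (1 - Re a * Re a))) +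
      (- (real (cnt X i j 2 0) * Re a) -
       real (cnt X i j 2 (Suc 0)) * (Re a * Re a - (1 - Re a * Re a)) +
       real (cnt X i j 2 2) * (Re a * Re a + (1 - Re a * Re a))) = D"
      using ER unfolding s3 by (simp add: vl_def s2)
    show ?thesis unfolding D_def[symmetric] using H0 by (simp add: algebra_simps power2_eq_square)
  qed
  show "Im a * ((real (cnt X i j 1 0) + real (cnt X i j 2 0) - real (cnt X i j 0 1) - real (cnt X i j 0 2))
         - 2 * Re a * (real (cnt X i j 1 2) - real (cnt X i j 2 1))) = 0"
    using EI unfolding s3 by (simp add: vl_def algebra_simps)
qed
lemma sq3: "(x::int)^2 = 3*y^2 \<Longrightarrow> \<bar>y\<bar> \<le> 6 \<Longrightarrow> y = 0"
proof (rule ccontr)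
  assume h: "x^2 = 3*y^2" "\<bar>y\<bar> \<le> 6" "y \<noteq> 0"
  have e: "\<bar>x\<bar>^2 = 3*\<bar>y\<bar>^2" using h by simp
  have xb: "\<bar>x\<bar> \<le> 11"
  proof (rule ccontr)
    assume "\<not> \<bar>x\<bar> \<le> 11"
    hence "12 \<le> \<bar>x\<bar>" by simp
    hence "12*12 \<le> \<bar>x\<bar>*\<bar>x\<bar>" by (meson mult_mono order_trans zero_le_numeral abs_ge_zero)
    moreover have "\<bar>y\<bar>*\<bar>y\<bar> \<le> 6*6" using h(2) by (meson mult_mono order_trans zero_le_numeral abs_ge_zero)
    ultimately show False using e by (simp add: power2_eq_square)
  qed
  have "\<bar>x\<bar> = 0 \<or> \<bar>x\<bar> = 1 \<or> \<bar>x\<bar> = 2 \<or> \<bar>x\<bar> = 3 \<or> \<bar>x\<bar> = 4 \<or> \<bar>x\<bar> = 5 \<or> \<bar>x\<bar> = 6 \<or> \<bar>x\<bar> = 7 \<or> \<bar>x\<bar> = 8 \<or> \<bar>x\<bar> = 9 \<or> \<bar>x\<bar> = 10 \<or> \<bar>x\<bar> = 11" using xb by presburger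
  moreover have "\<bar>y\<bar> = 1 \<or> \<bar>y\<bar> = 2 \<or> \<bar>y\<bar> = 3 \<or> \<bar>y\<bar> = 4 \<or> \<bar>y\<bar> = 5 \<or> \<bar>y\<bar> = 6" using h(2,3) by presburger
  ultimately show False using e by (elim disjE; simp)
qed

lemma sq17: "(x::int)^2 = 17*y^2 \<Longrightarrow> \<bar>y\<bar> \<le> 6 \<Longrightarrow> y = 0"
proof (rule ccontr)
  assume h: "x^2 = 17*y^2" "\<bar>y\<bar> \<le> 6" "y \<noteq> 0"
  have e: "\<bar>x\<bar>^2 = 17*\<bar>y\<bar>^2" using h by simp
  have xb: "\<bar>x\<bar> \<le> 24"
  proof (rule ccontr)
    assume "\<not> \<bar>x\<bar> \<le> 24"
    hence "25 \<le> \<bar>x\<bar>" by simp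
    hence "25*25 \<le> \<bar>x\<bar>*\<bar>x\<bar>" by (meson mult_mono order_trans zero_le_numeral abs_ge_zero)
    moreover have "\<bar>y\<bar>*\<bar>y\<bar> \<le> 6*6" using h(2) by (meson mult_mono order_trans zero_le_numeral abs_ge_zero)
    ultimately show False using e by (simp add: power2_eq_square)
  qed
  have "\<bar>x\<bar> = 0 \<or> \<bar>x\<bar> = 1 \<or> \<bar>x\<bar> = 2 \<or> \<bar>x\<bar> = 3 \<or> \<bar>x\<bar> = 4 \<or> \<bar>x\<bar> = 5 \<or> \<bar>x\<bar> = 6 \<or> \<bar>x\<bar> = 7 \<or> \<bar>x\<bar> = 8 \<or> \<bar>x\<bar> = 9 \<or> \<bar>x\<bar> = 10 \<or> \<bar>x\<bar> = 11 \<or> \<bar>x\<bar> = 12 \<or> \<bar>x\<bar> = 13 \<or> \<bar>x\<bar> = 14 \<or> \<bar>x\<bar> = 15 \<or> \<bar>x\<bar> = 16 \<or> \<bar>x\<bar> = 17 \<or> \<bar>x\<bar> = 18 \<or> \<bar>x\<bar> = 19 \<or> \<bar>x\<bar> = 20 \<or> \<bar>x\<bar> = 21 \<or> \<bar>x\<bar> = 22 \<or> \<bar>x\<bar> = 23 \<or> \<bar>x\<bar> = 24" using xb by presburger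
  moreover have "\<bar>y\<bar> = 1 \<or> \<bar>y\<bar> = 2 \<or> \<bar>y\<bar> = 3 \<or> \<bar>y\<bar> = 4 \<or> \<bar>y\<bar> = 5 \<or> \<bar>y\<bar> = 6" using h(2,3) by presburger
  ultimately show False using e by (elim disjE; simp)
qed

lemma pA:
  fixes N U :: nat and S :: int and c :: real
  assumes "4*c^2 = 3" "real N + c * S + (1 - 2*c^2) * U = 0" "\<bar>S\<bar> \<le> 6"
  shows "2*N = U"
proof -
  have c2: "c^2 = 3/4" using assms(1) by simp
  have "2*c*S = real U - 2 * real N" using assms(2) unfolding c2 by (simp add: algebra_simps)
  hence "(2*c*S)^2 = (real U - 2 * real N)^2" by simp
  hence "real_of_int (3 * S^2) = real_of_int ((int U - 2*int N)^2)"
    using c2 by (simp add: power_mult_distrib algebra_simps)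
  hence "(int U - 2*int N)^2 = 3 * S^2" by linarith
  hence "S = 0" using sq3 assms(3) by blast
  with assms(2) have "real N + real U - real U * (3/2) = 0" unfolding c2 by (simp add: algebra_simps)
  hence "real (2*N) = real U" by simp
  thus ?thesis by linarith
qed

lemma pB:
  fixes N U :: nat and S :: int and c :: real
  assumes "2*c^2 + c - 2 = 0" "real N + c * S + (1 - 2*c^2) * U = 0" "\<bar>S + int U\<bar> \<le> 6"
  shows "2*int N - int U + S = 0"
proof -
  have c2: "c^2 = (2 - c)/2" using assms(1) by simp
  have e: "c * (S + U) = real U - real N" using assms(2) unfolding c2 by (simp add: algebra_simps) 
  hence "2*(c*(S+U))^2 + (c*(S+U))*(S+U) - 2*(S+U)^2 = 0"
  proof -
    have "2*(c*(S+U))^2 + (c*(S+U))*(S+U) - 2*(S+U)^2 = (2*c^2+c-2)*(S+U)^2" by (simp add: algebra_simps power2_eq_square)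
    thus ?thesis using assms(1) by simp
  qed
  hence "2*(real U - real N)^2 + (real U - real N)*(S+U) - 2*(S+U)^2 = 0" using e by simp
  hence "real_of_int ((4*(int U - int N) + (S + int U))^2) = real_of_int (17 * (S + int U)^2)"
    by (simp add: algebra_simps power2_eq_square)
  hence "(4*(int U - int N) + (S + int U))^2 = 17 * (S + int U)^2" by linarith
  hence "S + int U = 0" using sq17 assms(3) by blast
  with e show ?thesis by simp
qed

lemma pC_d0:
  fixes N u h :: nat and S :: int and c :: real
  assumes "N + 2*u + 2*h = 6" "\<bar>S\<bar> \<le> 2*int h" "even S" "2 \<le> N"
    "real N + c*S + (1 - 2*c^2)*(2*u) = 0" "2/3 \<le> c" "c < 1" "4*c^2 \<noteq> 3" "2*c^2+c-2 \<noteq> 0"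
  shows False
proof -
  have "c^2 < 1^2" using assms(6,7) by (intro power_strict_mono) auto
  hence c2: "c^2 < 1" by simp
  have "(N=2 \<and> u=2 \<and> h=0 \<and> S=0) \<or> (N=2 \<and> u=1 \<and> h=1 \<and> (S=-2 \<or> S=0 \<or> S=2)) \<or>
        (N=2 \<and> u=0 \<and> h=2 \<and> (S=-4 \<or> S=-2 \<or> S=0 \<or> S=2 \<or> S=4)) \<or>
        (N=4 \<and> u=1 \<and> h=0 \<and> S=0) \<or> (N=4 \<and> u=0 \<and> h=1 \<and> (S=-2 \<or> S=0 \<or> S=2)) \<or> (N=6 \<and> u=0 \<and> h=0 \<and> S=0)"
    using assms(1-4) by presburger
  thus False
  proof (elim disjE conjE)
  qed (use assms(5-9) c2 in \<open>simp_all add: algebra_simps\<close>)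
qed

lemma pC:
  fixes a00 a01 a02 a10 a11 a12 a20 a21 a22 :: nat and c :: real
  assumes sum: "a00+a01+a02+a10+a11+a12+a20+a21+a22 = 6"
  and R: "real a00 + real a11 + real a22 + c * (real a10 + real a01 - real a20 - real a02) + (1 - 2*c^2) * (real a12 + real a21) = 0"
  and I: "(real a10 + real a20 - real a01 - real a02) - 2*c*(real a12 - real a21) = 0"
  and c: "2/3 \<le> c" "c < 1" "4*c^2 \<noteq> 3" "2*c^2+c-2 \<noteq> 0"
  shows "a00 + a11 + a22 \<le> 1"
proof (rule ccontr)
  assume N2: "\<not> a00 + a11 + a22 \<le> 1"
  define d where "d = int a12 - int a21"
  define e where "e = int a10 + int a20 - int a01 - int a02"
  have Ie: "real_of_int e = 2*c*real_of_int d" using I unfolding d_def e_def by simp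
  have nn: "int a00 \<ge> 0" "int a01 \<ge> 0" "int a02 \<ge> 0" "int a10 \<ge> 0" "int a11 \<ge> 0" "int a12 \<ge> 0" "int a20 \<ge> 0" "int a21 \<ge> 0" "int a22 \<ge> 0" by simp_all
  show False
  proof (cases "d = 0")
    case True
    hence "e = 0" using Ie by simp
    define h where "h = a10 + a20"
    define u where "u = a12"
    define S where "S = int a10 + int a01 - int a20 - int a02"
    have h1: "a01 + a02 = h" using \<open>e = 0\<close> unfolding e_def h_def by linarith
    have u1: "a21 = u" using True unfolding d_def u_def by simp
    have s6: "(a00 + a11 + a22) + 2*u + 2*h = 6" using sum h1 u1 unfolding h_def u_def distrib_left by linarith
    have h1': "int a01 + int a02 = int a10 + int a20" using h1 unfolding h_def by (metis of_nat_add)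
    have Sb: "\<bar>S\<bar> \<le> 2*int h" using h1' unfolding S_def h_def abs_le_iff of_nat_add distrib_left using nn by (intro conjI) linarith+
    have "S = 2*(int h - int a20 - int a02)" using h1' unfolding S_def h_def of_nat_add right_diff_distrib distrib_left by linarith
    hence Se: "even S" by simp
    have Re: "real (a00 + a11 + a22) + c*S + (1 - 2*c^2)*(2*u) = 0"
      using R u1 unfolding S_def u_def by (simp add: algebra_simps)
    have N2': "2 \<le> a00 + a11 + a22" using N2 by simp
    show False by (rule pC_d0[OF s6 Sb Se N2' Re c(1-4)])
  next
    case False
    have ae: "real_of_int \<bar>e\<bar> = 2*c*real_of_int \<bar>d\<bar>" using Ie c(1) by (simp add: abs_mult)
    have dpos: "real_of_int \<bar>d\<bar> > 0" using False by simp
    have "0 \<le> (6*c - 4) * real_of_int \<bar>d\<bar>" using c(1) dpos by (intro mult_nonneg_nonneg) auto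
    hence "real_of_int (4*\<bar>d\<bar>) \<le> real_of_int (3*\<bar>e\<bar>)" using ae by (simp add: algebra_simps)
    hence E1: "4*\<bar>d\<bar> \<le> 3*\<bar>e\<bar>" by (simp only: of_int_le_iff)
    have "0 < (2 - 2*c) * real_of_int \<bar>d\<bar>" using c(2) dpos by (intro mult_pos_pos) auto
    hence "real_of_int \<bar>e\<bar> < real_of_int (2*\<bar>d\<bar>)" using ae by (simp add: algebra_simps)
    hence E2: "\<bar>e\<bar> < 2*\<bar>d\<bar>" by (simp only: of_int_less_iff)
    have E3: "\<bar>e\<bar> \<le> int (a10+a20+a01+a02)" unfolding e_def abs_le_iff of_nat_add using nn by (intro conjI) linarith+
    have E4: "\<bar>d\<bar> \<le> int (a12+a21)" unfolding d_def abs_le_iff of_nat_add using nn by (intro conjI) linarith+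
    have E5: "a10+a20+a01+a02 + (a12+a21) \<le> 4" using sum N2 by linarith
    have E6: "\<bar>e\<bar> + \<bar>d\<bar> \<le> 4" using E3 E4 E5 by linarith
    have E7: "\<bar>d\<bar> \<ge> 1" using False by linarith
    show False
    proof (cases "\<bar>d\<bar> = 1")
      case True thus False using E1 E2 by linarith
    next
      case False thus False using E1 E6 E7 by linarith
    qed
  qed
qed
lemma tri: "t + p + q = (6::nat) \<Longrightarrow> (t=0 \<and> p=0 \<and> q=6) \<or> (t=0 \<and> p=1 \<and> q=5) \<or> (t=0 \<and> p=2 \<and> q=4) \<or> (t=0 \<and> p=3 \<and> q=3) \<or> (t=0 \<and> p=4 \<and> q=2) \<or> (t=0 \<and> p=5 \<and> q=1) \<or> (t=0 \<and> p=6 \<and> q=0) \<or> (t=1 \<and> p=0 \<and> q=5) \<or> (t=1 \<and> p=1 \<and> q=4) \<or> (t=1 \<and> p=2 \<and> q=3) \<or> (t=1 \<and> p=3 \<and> q=2) \<or> (t=1 \<and> p=4 \<and> q=1) \<or> (t=1 \<and> p=5 \<and> q=0) \<or> (t=2 \<and> p=0 \<and> q=4) \<or> (t=2 \<and> p=1 \<and> q=3) \<or> (t=2 \<and> p=2 \<and> q=2) \<or> (t=2 \<and> p=3 \<and> q=1) \<or> (t=2 \<and> p=4 \<and> q=0) \<or> (t=3 \<and> p=0 \<and> q=3) \<or> (t=3 \<and> p=1 \<and> q=2) \<or> (t=3 \<and> p=2 \<and> q=1) \<or> (t=3 \<and> p=3 \<and> q=0) \<or> (t=4 \<and> p=0 \<and>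 q=2) \<or> (t=4 \<and> p=1 \<and> q=1) \<or> (t=4 \<and> p=2 \<and> q=0) \<or> (t=5 \<and> p=0 \<and> q=1) \<or> (t=5 \<and> p=1 \<and> q=0) \<or> (t=6 \<and> p=0 \<and> q=0)"
proof -
  assume h: "t + p + q = 6"
  have "t = 0 \<or> t = 1 \<or> t = 2 \<or> t = 3 \<or> t = 4 \<or> t = 5 \<or> t = 6" using h by linarith
  moreover have "p = 0 \<or> p = 1 \<or> p = 2 \<or> p = 3 \<or> p = 4 \<or> p = 5 \<or> p = 6" using h by linarith
  ultimately show ?thesis using h by (elim disjE; simp; linarith)
qed

lemma colA: "t + p + q = (6::nat) \<Longrightarrow> 12 \<le> t^2 + p^2 + q^2"
  by (drule tri) auto
lemma colB: "t + p + q = (6::nat) \<Longrightarrow> 16 \<le> 2*(real t^2 + real p^2 + real q^2) - 2*real p*real q"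
  by (drule tri) auto
lemma colC: "t + p + q = (6::nat) \<Longrightarrow> 14 \<le> 2*(real t^2 + real p^2 + real q^2) - 2*real p*real q + 2*real t*(real p - real q)"
  by (drule tri) auto
lemma colD:
  assumes "t + p + q = (6::nat)" "\<bar>c\<bar> < 2/3"
  shows "6 < real t^2 + real p^2 + real q^2 + 2*c*real t*(real p - real q) + 2*(1 - 2*c^2)*real p*real q"
proof -
  have "\<bar>c\<bar>^2 < (2/3)^2" using assms(2) by (intro power_strict_mono) auto
  hence c2: "c^2 < 4/9" by (simp add: power_divide)
  have cb: "-2/3 < c" "c < 2/3" using assms(2) by linarith+
  show ?thesis using tri[OF assms(1)] c2 cb by (elim disjE conjE; simp; linarith)
qed

lemma col_sum:
  assumes "\<forall>i k. X i k < (3::nat)"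
  shows "col X k 0 + col X k 1 + col X k 2 = 6"
proof -
  have "col X k 0 + col X k 1 + col X k 2 = (\<Sum>i<6::nat. (if X i k = 0 then 1 else 0) + (if X i k = 1 then 1 else 0) + (if X i k = 2 then 1 else (0::nat)))"
    unfolding col_def by (simp add: sum.distrib)
  also have "\<dots> = (\<Sum>i<6::nat. 1)"
  proof (rule sum.cong[OF refl])
    fix i have "X i k < 3" using assms by blast
    thus "(if X i k = 0 then 1 else 0) + (if X i k = 1 then 1 else 0) + (if X i k = 2 then 1 else (0::nat)) = 1" by auto
  qed
  finally show ?thesis by simp
qed

lemma cnt_diag:
  assumes "\<forall>i k. X i k < (3::nat)"
  shows "cnt X i i 0 0 + cnt X i i 1 1 + cnt X i i 2 2 = 6" and "x \<noteq> y \<Longrightarrow> cnt X i i x y = 0"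
proof -
  have "cnt X i i 0 0 + cnt X i i 1 1 + cnt X i i 2 2 = (\<Sum>k<6::nat. (if X i k = 0 then 1 else 0) + (if X i k = 1 then 1 else 0) + (if X i k = 2 then 1 else (0::nat)))"
    unfolding cnt_def by (simp add: sum.distrib)
  also have "\<dots> = (\<Sum>k<6::nat. 1)"
  proof (rule sum.cong[OF refl])
    fix k have "X i k < 3" using assms by blast
    thus "(if X i k = 0 then 1 else 0) + (if X i k = 1 then 1 else 0) + (if X i k = 2 then 1 else (0::nat)) = 1" by auto
  qed
  finally show "cnt X i i 0 0 + cnt X i i 1 1 + cnt X i i 2 2 = 6" by simp
  show "x \<noteq> y \<Longrightarrow> cnt X i i x y = 0" unfolding cnt_def by simp
qed

lemma cnt_sum9:
  assumes "\<forall>i k. X i k < (3::nat)"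
  shows "cnt X i j 0 0 + cnt X i j 0 1 + cnt X i j 0 2 + cnt X i j 1 0 + cnt X i j 1 1 + cnt X i j 1 2 + cnt X i j 2 0 + cnt X i j 2 1 + cnt X i j 2 2 = 6"
proof -
  have "(\<Sum>k<6::nat. (\<lambda>x y. (1::complex)) (X i k) (X j k)) = (\<Sum>x<3. \<Sum>y<3. of_nat (cnt X i j x y) * (\<lambda>x y. (1::complex)) x y)"
    by (rule ip) (use assms in blast)
  hence "(of_nat 6 :: complex) = of_nat (cnt X i j 0 0 + cnt X i j 0 1 + cnt X i j 0 2 + cnt X i j 1 0 + cnt X i j 1 1 + cnt X i j 1 2 + cnt X i j 2 0 + cnt X i j 2 1 + cnt X i j 2 2)"
    by (simp add: s3 add.assoc)
  thus ?thesis by (simp only: of_nat_eq_iff)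
qed

lemma sum_diag: "(\<Sum>i<6::nat. \<Sum>j<6::nat. (if i = j then K else 0)) = 6 * (K::real)"
  by (simp add: sum.delta)

definition wA :: "nat \<Rightarrow> nat \<Rightarrow> real" where
  "wA x y = (if x = y then 2 else if x + y = 3 then -1 else 0)"
definition wB :: "nat \<Rightarrow> nat \<Rightarrow> real" where
  "wB x y = (if x = y then 2 else if x + y = 3 then -1 else if x = 0 then (if y = 1 then 1 else -1) else (if x = 1 then 1 else -1))"
definition wN :: "nat \<Rightarrow> nat \<Rightarrow> real" where
  "wN x y = (if x = y then 1 else 0)"
definition wR :: "real \<Rightarrow> nat \<Rightarrow> nat \<Rightarrow> real" where
  "wR c x y = (if x = y then 1 else if x + y = 3 then 1 - 2*c^2 else if x + y = 1 then c else -c)"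

lemma Pw_A: "Pw wA X i j = 2*(real (cnt X i j 0 0) + real (cnt X i j 1 1) + real (cnt X i j 2 2)) - real (cnt X i j 1 2) - real (cnt X i j 2 1)"
  unfolding Pw_def s3 wA_def by simp
lemma Pw_B: "Pw wB X i j = 2*(real (cnt X i j 0 0) + real (cnt X i j 1 1) + real (cnt X i j 2 2)) - real (cnt X i j 1 2) - real (cnt X i j 2 1)
   + (real (cnt X i j 1 0) + real (cnt X i j 0 1) - real (cnt X i j 0 2) - real (cnt X i j 2 0))"
  unfolding Pw_def s3 wB_def by simp
lemma Pw_N: "Pw wN X i j = real (cnt X i j 0 0 + cnt X i j 1 1 + cnt X i j 2 2)"
  unfolding Pw_def s3 wN_def by simp
lemma Pw_R: "Pw (wR c) X i j = real (cnt X i j 0 0) + real (cnt X i j 1 1) + real (cnt X i j 2 2)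
         + c * (real (cnt X i j 1 0) + real (cnt X i j 0 1) - real (cnt X i j 2 0) - real (cnt X i j 0 2))
         + (1 - 2 * c\<^sup>2) * (real (cnt X i j 1 2) + real (cnt X i j 2 1))"
  unfolding Pw_def s3 wR_def by (simp add: algebra_simps)

lemma Cw_A: "Cw wA X k = 2*(real (col X k 0)^2 + real (col X k 1)^2 + real (col X k 2)^2) - 2*real (col X k 1)*real (col X k 2)"
  unfolding Cw_def s3 wA_def by (simp add: power2_eq_square)
lemma Cw_B: "Cw wB X k = 2*(real (col X k 0)^2 + real (col X k 1)^2 + real (col X k 2)^2) - 2*real (col X k 1)*real (col X k 2)
   + 2*real (col X k 0)*(real (col X k 1) - real (col X k 2))"
  unfolding Cw_def s3 wB_def by (simp add: power2_eq_square algebra_simps)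
lemma Cw_N: "Cw wN X k = real (col X k 0)^2 + real (col X k 1)^2 + real (col X k 2)^2"
  unfolding Cw_def s3 wN_def by (simp add: power2_eq_square)
lemma Cw_R: "Cw (wR c) X k = real (col X k 0)^2 + real (col X k 1)^2 + real (col X k 2)^2
   + 2*c*real (col X k 0)*(real (col X k 1) - real (col X k 2)) + 2*(1 - 2*c^2)*real (col X k 1)*real (col X k 2)"
  unfolding Cw_def s3 wR_def by (simp add: power2_eq_square algebra_simps)

lemma main_pos:
  assumes a1: "cmod a = 1" and c1: "2/3 \<le> Re a" "Re a < 1"
    and hd: "complex_hadamard 6 H" and ent: "\<forall>i<6. \<forall>j<6. H i j \<in> {1, a, - cnj a}"
  shows False
proof -
  define X where "X = (\<lambda>i k. cd a (H i k))"
  define c where "c = Re a"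
  have X3: "\<forall>i k. X i k < 3" by (simp add: X_def cd_lt)
  have n1: "(Re a)\<^sup>2 + (Im a)\<^sup>2 = 1" using a1 by (simp add: cmod_def)
  have Ima: "Im a \<noteq> 0"
  proof
    assume "Im a = 0"
    hence "(Re a)^2 = 1" using n1 by simp
    hence "Re a = 1 \<or> Re a = -1" by (simp add: power2_eq_1_iff)
    hence "Re a = 1" using c1(1) by linarith
    thus False using c1(2) by simp
  qed
  have R: "real (cnt X i j 0 0) + real (cnt X i j 1 1) + real (cnt X i j 2 2)
         + c * (real (cnt X i j 1 0) + real (cnt X i j 0 1) - real (cnt X i j 2 0) - real (cnt X i j 0 2))
         + (1 - 2 * c\<^sup>2) * (real (cnt X i j 1 2) + real (cnt X i j 2 1)) = (if i = j then 6 else 0)"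
    if "i < 6" "j < 6" for i j
    using pair_eq(1)[OF a1 hd ent that] unfolding X_def c_def .
  have I: "(real (cnt X i j 1 0) + real (cnt X i j 2 0) - real (cnt X i j 0 1) - real (cnt X i j 0 2))
         - 2 * c * (real (cnt X i j 1 2) - real (cnt X i j 2 1)) = 0"
    if "i < 6" "j < 6" for i j
    using pair_eq(2)[OF a1 hd ent that] Ima unfolding X_def c_def by simp
  have S9: "cnt X i j 0 0 + cnt X i j 0 1 + cnt X i j 0 2 + cnt X i j 1 0 + cnt X i j 1 1 + cnt X i j 1 2 + cnt X i j 2 0 + cnt X i j 2 1 + cnt X i j 2 2 = 6" for i j
    by (rule cnt_sum9[OF X3])
  have CS: "col X k 0 + col X k 1 + col X k 2 = 6" for k by (rule col_sum[OF X3])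
  have D1: "cnt X i i 0 0 + cnt X i i 1 1 + cnt X i i 2 2 = 6" for i by (rule cnt_diag(1)[OF X3])
  have D2: "cnt X i i 1 2 = 0" "cnt X i i 2 1 = 0" "cnt X i i 1 0 = 0" "cnt X i i 0 1 = 0" "cnt X i i 2 0 = 0" "cnt X i i 0 2 = 0" for i
    by (rule cnt_diag(2)[OF X3]; simp)+
  have cA: "2/3 \<le> c" "c < 1" using c1 unfolding c_def by auto
  have D1r: "real (cnt X i i 0 0) + real (cnt X i i 1 1) + real (cnt X i i 2 2) = 6" for i
    using arg_cong[OF D1[of i], of real] by simp
  show False
  proof (cases "4*c^2 = 3")
    case True
    have P: "Pw wA X i j = (if i = j then 12 else 0)" if "i < 6" "j < 6" for i j
    proof (cases "i = j")
      case True thus ?thesis unfolding Pw_A using D1r[of i] D2[of i] by simp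
    next
      case False
      have "2*(cnt X i j 0 0 + cnt X i j 1 1 + cnt X i j 2 2) = cnt X i j 1 2 + cnt X i j 2 1"
      proof (rule pA[OF \<open>4*c^2 = 3\<close>])
        show "real (cnt X i j 0 0 + cnt X i j 1 1 + cnt X i j 2 2) + c * real_of_int (int (cnt X i j 1 0) + int (cnt X i j 0 1) - int (cnt X i j 2 0) - int (cnt X i j 0 2)) + (1 - 2 * c\<^sup>2) * real (cnt X i j 1 2 + cnt X i j 2 1) = 0"
          using R[OF that] False by simp
        show "\<bar>int (cnt X i j 1 0) + int (cnt X i j 0 1) - int (cnt X i j 2 0) - int (cnt X i j 0 2)\<bar> \<le> 6"
          using S9[of i j] unfolding abs_le_iff by (intro conjI) linarith+
      qed
      hence "2*(real (cnt X i j 0 0) + real (cnt X i j 1 1) + real (cnt X i j 2 2)) = real (cnt X i j 1 2) + real (cnt X i j 2 1)"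
        by (metis of_nat_add of_nat_mult of_nat_numeral)
      thus ?thesis unfolding Pw_A using False by simp
    qed
    have "(\<Sum>i<6. \<Sum>j<6. Pw wA X i j) = (\<Sum>i<6::nat. \<Sum>j<6::nat. if i = j then 12 else 0)"
      by (rule sum.cong[OF refl], rule sum.cong[OF refl], simp add: P)
    hence "(\<Sum>i<6. \<Sum>j<6. Pw wA X i j) = 72" by (simp add: sum_diag)
    moreover have "(\<Sum>k<6. Cw wA X k) \<ge> (\<Sum>k<6::nat. 16)"
      by (rule sum_mono) (use colB[OF CS] in \<open>simp add: Cw_A\<close>)
    ultimately show False using gen_dc[of wA X] by simp
  next
    case notA: False
    show False
    proof (cases "2*c^2 + c - 2 = 0")
      case True
      have P: "Pw wB X i j = (if i = j then 12 else 0)" if "i < 6" "j < 6" for i j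
      proof (cases "i = j")
        case True thus ?thesis unfolding Pw_B using D1r[of i] D2[of i] by simp
      next
        case False
        have "2*int (cnt X i j 0 0 + cnt X i j 1 1 + cnt X i j 2 2) - int (cnt X i j 1 2 + cnt X i j 2 1) + (int (cnt X i j 1 0) + int (cnt X i j 0 1) - int (cnt X i j 2 0) - int (cnt X i j 0 2)) = 0"
        proof (rule pB[OF \<open>2*c^2 + c - 2 = 0\<close>])
          show "real (cnt X i j 0 0 + cnt X i j 1 1 + cnt X i j 2 2) + c * real_of_int (int (cnt X i j 1 0) + int (cnt X i j 0 1) - int (cnt X i j 2 0) - int (cnt X i j 0 2)) + (1 - 2 * c\<^sup>2) * real (cnt X i j 1 2 + cnt X i j 2 1) = 0"
            using R[OF that] False by simp
          show "\<bar>int (cnt X i j 1 0) + int (cnt X i j 0 1) - int (cnt X i j 2 0) - int (cnt X i j 0 2) + int (cnt X i j 1 2 + cnt X i j 2 1)\<bar> \<le> 6"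
            using S9[of i j] unfolding abs_le_iff by (intro conjI) linarith+
        qed
        hence "real_of_int (2*int (cnt X i j 0 0 + cnt X i j 1 1 + cnt X i j 2 2) - int (cnt X i j 1 2 + cnt X i j 2 1) + (int (cnt X i j 1 0) + int (cnt X i j 0 1) - int (cnt X i j 2 0) - int (cnt X i j 0 2))) = 0"
          by simp
        thus ?thesis unfolding Pw_B using False by simp
      qed
      have "(\<Sum>i<6. \<Sum>j<6. Pw wB X i j) = (\<Sum>i<6::nat. \<Sum>j<6::nat. if i = j then 12 else 0)"
        by (rule sum.cong[OF refl], rule sum.cong[OF refl], simp add: P)
      hence "(\<Sum>i<6. \<Sum>j<6. Pw wB X i j) = 72" by (simp add: sum_diag)
      moreover have "(\<Sum>k<6. Cw wB X k) \<ge> (\<Sum>k<6::nat. 14)"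
        by (rule sum_mono) (use colC[OF CS] in \<open>simp add: Cw_B\<close>)
      ultimately show False using gen_dc[of wB X] by simp
    next
      case notB: False
      have P: "Pw wN X i j \<le> (if i = j then 6 else 1)" if "i < 6" "j < 6" for i j
      proof (cases "i = j")
        case True thus ?thesis unfolding Pw_N using D1r[of i] by simp
      next
        case False
        have "cnt X i j 0 0 + cnt X i j 1 1 + cnt X i j 2 2 \<le> 1"
          by (rule pC[OF S9[of i j] _ I[OF that] cA notA notB]) (use R[OF that] False in simp)
        thus ?thesis unfolding Pw_N using False by simp
      qed
      have "(\<Sum>i<6. \<Sum>j<6. Pw wN X i j) \<le> (\<Sum>i<6::nat. \<Sum>j<6::nat. (if i = j then 6 else 1))"
        by (rule sum_mono, rule sum_mono, simp add: P)
      also have "\<dots> = 66" by (simp add: s6)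
      finally have "(\<Sum>i<6. \<Sum>j<6. Pw wN X i j) \<le> 66" .
      moreover have "(\<Sum>k<6. Cw wN X k) \<ge> (\<Sum>k<6::nat. 12)"
      proof (rule sum_mono)
        fix k
        have "12 \<le> col X k 0 ^2 + col X k 1 ^2 + col X k 2 ^2" by (rule colA[OF CS])
        hence "real 12 \<le> real (col X k 0 ^2 + col X k 1 ^2 + col X k 2 ^2)" by (simp only: of_nat_le_iff)
        thus "12 \<le> Cw wN X k" unfolding Cw_N by simp
      qed
      ultimately show False using gen_dc[of wN X] by simp
    qed
  qed
qed

lemma main_small:
  assumes a1: "cmod a = 1" and c1: "\<bar>Re a\<bar> < 2/3"
    and hd: "complex_hadamard 6 H" and ent: "\<forall>i<6. \<forall>j<6. H i j \<in> {1, a, - cnj a}"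
  shows False
proof -
  define X where "X = (\<lambda>i k. cd a (H i k))"
  define c where "c = Re a"
  have X3: "\<forall>i k. X i k < 3" by (simp add: X_def cd_lt)
  have R: "real (cnt X i j 0 0) + real (cnt X i j 1 1) + real (cnt X i j 2 2)
         + c * (real (cnt X i j 1 0) + real (cnt X i j 0 1) - real (cnt X i j 2 0) - real (cnt X i j 0 2))
         + (1 - 2 * c\<^sup>2) * (real (cnt X i j 1 2) + real (cnt X i j 2 1)) = (if i = j then 6 else 0)"
    if "i < 6" "j < 6" for i j
    using pair_eq(1)[OF a1 hd ent that] unfolding X_def c_def .
  have CS: "col X k 0 + col X k 1 + col X k 2 = 6" for k by (rule col_sum[OF X3])
  have "(\<Sum>i<6. \<Sum>j<6. Pw (wR c) X i j) = (\<Sum>i<6::nat. \<Sum>j<6::nat. if i = j then 6 else 0)"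
  proof (rule sum.cong[OF refl], rule sum.cong[OF refl])
    fix i j assume "i \<in> {..<6::nat}" "j \<in> {..<6::nat}"
    thus "Pw (wR c) X i j = (if i = j then 6 else 0)" unfolding Pw_R by (intro R) auto
  qed
  hence "(\<Sum>i<6. \<Sum>j<6. Pw (wR c) X i j) = 36" by (simp add: sum_diag)
  moreover have "(\<Sum>k<6::nat. 6) < (\<Sum>k<6. Cw (wR c) X k)"
  proof (rule sum_strict_mono)
    fix k
    show "6 < Cw (wR c) X k" unfolding Cw_R using colD[OF CS, of c] c1 unfolding c_def by simp
  qed (auto simp: lessThan_empty_iff)
  ultimately show False using gen_dc[of "wR c" X] by simp
qed

lemma real_case:
  assumes hd: "complex_hadamard 6 H" and ent: "\<forall>i<6. \<forall>j<6. H i j \<in> {1, -1}"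
  shows False
proof -
  have orth: "(\<Sum>k<6. H i k * cnj (H j k)) = (if i = j then 6 else 0)" if "i < 6" "j < 6" for i j
    using hd that unfolding complex_hadamard_def by simp
  define f where "f k = (H 0 k + H 1 k) * (cnj (H 0 k) + cnj (H 2 k))" for k
  have "(\<Sum>k<6. f k) = (\<Sum>k<6. H 0 k * cnj (H 0 k)) + (\<Sum>k<6. H 0 k * cnj (H 2 k)) + (\<Sum>k<6. H 1 k * cnj (H 0 k)) + (\<Sum>k<6. H 1 k * cnj (H 2 k))"
    unfolding f_def by (simp add: sum.distrib algebra_simps)
  also have "\<dots> = 6" using orth[of 0 0] orth[of 0 2] orth[of 1 0] orth[of 1 2] by simp
  finally have F6: "(\<Sum>k<6. f k) = 6" .
  define g where "g k = (if f k = 0 then 0 else (1::nat))" for k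
  have fg: "f k = 4 * of_nat (g k)" if "k < 6" for k
  proof -
    have "H 0 k \<in> {1,-1}" "H 1 k \<in> {1,-1}" "H 2 k \<in> {1,-1}" using ent that by auto
    thus ?thesis unfolding f_def g_def by auto
  qed
  have "(\<Sum>k<6. f k) = (\<Sum>k<6. 4 * of_nat (g k))" by (rule sum.cong) (auto simp: fg)
  also have "\<dots> = of_nat (4 * (\<Sum>k<6. g k))" by (simp add: sum_distrib_left)
  finally have "(of_nat (4 * (\<Sum>k<6. g k)) :: complex) = of_nat 6" using F6 by simp
  hence "4 * (\<Sum>k<6. g k) = 6" by (simp only: of_nat_eq_iff)
  thus False by presburger
qed

theorem mainTheorem10:
  fixes a :: complex
  assumes "cmod a = 1"
  shows "\<not> (\<exists>H. complex_hadamard 6 H \<and>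
                (\<forall>i<6. \<forall>j<6. H i j \<in> {1, a, - cnj a}))"
proof
  assume "\<exists>H. complex_hadamard 6 H \<and> (\<forall>i<6. \<forall>j<6. H i j \<in> {1, a, - cnj a})"
  then obtain H where hd: "complex_hadamard 6 H" and ent: "\<forall>i<6. \<forall>j<6. H i j \<in> {1, a, - cnj a}" by blast
  have n1: "(Re a)\<^sup>2 + (Im a)\<^sup>2 = 1" using assms by (simp add: cmod_def)
  have rb: "\<bar>Re a\<bar> \<le> 1" using abs_Re_le_cmod[of a] assms by simp
  consider "\<bar>Re a\<bar> < 2/3" | "2/3 \<le> Re a \<and> Re a < 1" | "Re a \<le> -2/3 \<and> -1 < Re a" | "Re a = 1" | "Re a = -1"
    using rb by linarith
  thus False
  proof cases
    case 1 thus False using main_small[OF assms _ hd ent] by simp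
  next
    case 2 thus False using main_pos[OF assms _ _ hd ent] by simp
  next
    case 3
    have a1': "cmod (- cnj a) = 1" using assms by simp
    have ent': "\<forall>i<6. \<forall>j<6. H i j \<in> {1, - cnj a, - cnj (- cnj a)}" using ent by auto
    show False using main_pos[OF a1' _ _ hd ent'] 3 by simp
  next
    case 4
    hence "Im a = 0" using n1 by simp
    hence "a = 1" using 4 by (simp add: complex_eq_iff)
    thus False using real_case[OF hd] ent by auto
  next
    case 5
    hence "Im a = 0" using n1 by simp
    hence "a = -1" using 5 by (simp add: complex_eq_iff)
    thus False using real_case[OF hd] ent by auto
  qed
qed
end
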